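(* Let $0\le b\le1$, $M>0$ and $0\le\alpha<1$, and let $r_0=r_0(\alpha)$ be the real root in $(0,1)$ of the equation \[\big((1-\alpha)(1+M)-2(2-\alpha)(2b-M)r\big)(1-r)^3=M\big(1-\alpha+(1+\alpha)r\big).\] Let $\mathcal{F}$ be the class of functions $f\in\mathcal{A}_b$, $f(z)=z+\sum_{n\ge2}a_nz^n$, with $|a_n|\le M$ for all $n\ge3$. Then: (i) every $f\in\mathcal{F}$ satisfies $\left|\frac{zf''(z)}{f'(z)}\right|\le1-\alpha$ for $|z|\le r_0$; (ii) $r_0(\alpha)$ is the radius of convexity of order $\alpha$ of $\mathcal{F}$; (iii) $r_0(1/2)$ is the radius of uniform convexity of $\mathcal{F}$. All results are sharp, with extremal function $f_0(z)=z-2bz^2-\frac{Mz^3}{1-z}$.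
   Context: $\mathbb{D}=\{z\in\mathbb{C}:|z|<1\}$. For $0\le b\le1$, $\mathcal{A}_b$ is the class of analytic functions $f$ on $\mathbb{D}$ of the form $f(z)=z+a_2z^2+a_3z^3+\cdots$ with $|a_2|=2b$. For a class $\mathcal{F}$ of analytic functions on $\mathbb{D}$ normalized by $f(0)=0$, $f'(0)=1$, and $0\le\alpha<1$, the radius of convexity of order $\alpha$ of $\mathcal{F}$ is the supremum of $r\in(0,1]$ such that every $f\in\mathcal{F}$ satisfies $f'(z)\ne0$ and $\operatorname{Re}\big(1+zf''(z)/f'(z)\big)>\alpha$ for $|z|<r$. The radius of uniform convexity of $\mathcal{F}$ is the supremum of $r\in(0,1]$ such that every $f\in\mathcal{F}$ satisfies $f'(z)\ne0$ and $\operatorname{Re}\big(1+zf''(z)/f'(z)\big)>\left|zf''(z)/f'(z)\right|$ for $|z|<r$. *)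

theory Defs
  imports "HOL-Analysis.Analysis"
begin

definition taylor_coeff :: "(complex \<Rightarrow> complex) \<Rightarrow> nat \<Rightarrow> complex" where
  "taylor_coeff f n = (deriv ^^ n) f 0 / of_nat (fact n)"

definition class_A :: "real \<Rightarrow> (complex \<Rightarrow> complex) set" where
  "class_A b = {f. f holomorphic_on ball 0 1 \<and> f 0 = 0 \<and> deriv f 0 = 1
                  \<and> norm (taylor_coeff f 2) = 2 * b}"

definition class_F :: "real \<Rightarrow> real \<Rightarrow> (complex \<Rightarrow> complex) set" where
  "class_F b M = {f \<in> class_A b. \<forall>n\<ge>3. norm (taylor_coeff f n) \<le> M}"

definition radius_convexity_order :: "(complex \<Rightarrow> complex) set \<Rightarrow> real \<Rightarrow> real" where
  "radius_convexity_order F \<alpha> =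
     Sup {r \<in> {0<..1}. \<forall>f\<in>F. \<forall>z. norm z < r \<longrightarrow>
            deriv f z \<noteq> 0 \<and> Re (1 + z * deriv (deriv f) z / deriv f z) > \<alpha>}"

definition radius_uniform_convexity :: "(complex \<Rightarrow> complex) set \<Rightarrow> real" where
  "radius_uniform_convexity F =
     Sup {r \<in> {0<..1}. \<forall>f\<in>F. \<forall>z. norm z < r \<longrightarrow>
            deriv f z \<noteq> 0 \<and>
            Re (1 + z * deriv (deriv f) z / deriv f z) > norm (z * deriv (deriv f) z / deriv f z)}"

end

theory Submission
  imports Defs "HOL-Complex_Analysis.Complex_Analysis"
begin


lemma geometric_deriv2_sums:
  fixes z :: "'a :: {real_normed_field,banach}"
  assumes "norm z < 1"
  shows   "(\<lambda>n. of_nat (Suc n) * of_nat (Suc (Suc n)) * z ^ n) sums (2 / (1 - z)^3)"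
proof -
  have "(\<lambda>n. diffs (\<lambda>n. of_nat (Suc n)) n * z^n) sums (2 / (1 - z)^3)"
  proof (rule termdiffs_sums_strong[where K=1])
    fix z :: 'a assume "norm z < 1"
    thus "(\<lambda>n. of_nat (Suc n) * z^n) sums (1 / (1 - z)^2)" by (rule geometric_deriv_sums)
  next
    have "1 - z \<noteq> 0" using assms by auto
    then show "((\<lambda>z. 1 / (1 - z)^2) has_field_derivative 2 / (1 - z)^3) (at z)"
    proof -
      have "((\<lambda>z. 1 / (1 - z)^2) has_field_derivative (- (of_nat 2 * (1 - z) ^ 1 * (0 - 1)) / ((1 - z)^2 * (1 - z)^2))) (at z)"
        using \<open>1 - z \<noteq> 0\<close> by (auto intro!: derivative_eq_intros)
      moreover have "\<And>w::'a. w \<noteq> 0 \<Longrightarrow> (- (of_nat 2 * w ^ 1 * (0 - 1)) / (w^2 * w^2)) = 2 / w^3"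
        by (simp add: field_simps power2_eq_square power3_eq_cube)
      hence "(- (of_nat 2 * (1 - z) ^ 1 * (0 - 1)) / ((1 - z)^2 * (1 - z)^2)) = 2 / (1 - z)^3"
        using \<open>1 - z \<noteq> 0\<close> by blast
      ultimately show ?thesis by simp
    qed
  qed (use assms in auto)
  thus ?thesis unfolding diffs_def by (simp add: mult.assoc)
qed

lemma series_derivs:
  assumes hol: "f holomorphic_on ball 0 1" and z: "norm z < 1"
  shows "(\<lambda>n. of_nat (Suc n) * taylor_coeff f (Suc n) * z^n) sums deriv f z"
    and "(\<lambda>n. of_nat (Suc n) * of_nat (Suc (Suc n)) * taylor_coeff f (Suc (Suc n)) * z^n) sums deriv (deriv f) z"
proof -
  have hd: "deriv f holomorphic_on ball 0 1" by (rule holomorphic_deriv[OF hol]) auto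
  have hdd: "deriv (deriv f) holomorphic_on ball 0 1" by (rule holomorphic_deriv[OF hd]) auto
  have zb: "z \<in> ball 0 1" using z by auto
  have e1: "\<And>n. (deriv ^^ n) (deriv f) = (deriv ^^ Suc n) f" by (simp add: funpow_Suc_right del: funpow.simps)
  have e2: "\<And>n. (deriv ^^ n) (deriv (deriv f)) = (deriv ^^ Suc (Suc n)) f" by (simp add: funpow_Suc_right del: funpow.simps)
  have gen: "\<And>X F c::complex. c \<noteq> 0 \<Longrightarrow> F \<noteq> 0 \<Longrightarrow> X / F = c * (X / (c * F))"
    by (simp add: field_simps)
  have gen2: "\<And>X F a c::complex. a \<noteq> 0 \<Longrightarrow> c \<noteq> 0 \<Longrightarrow> F \<noteq> 0 \<Longrightarrow> X / F = a * (c * (X / (c * (a * F))))"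
    by (simp add: field_simps)
  have nz: "\<And>n. (of_nat (Suc n) :: complex) \<noteq> 0" by (metis of_nat_eq_0_iff nat.distinct(1))
  have fz: "\<And>n. (fact n :: complex) \<noteq> 0" by simp
  have fS: "\<And>n. (of_nat (fact (Suc n)) :: complex) = of_nat (Suc n) * fact n"
    by (metis fact_Suc of_nat_fact)
  have c1: "\<And>n. (deriv ^^ Suc n) f 0 / fact n = of_nat (Suc n) * taylor_coeff f (Suc n)"
    unfolding taylor_coeff_def fS
    by (rule gen[OF nz fz])
  have c2: "\<And>n. (deriv ^^ Suc (Suc n)) f 0 / fact n = of_nat (Suc n) * of_nat (Suc (Suc n)) * taylor_coeff f (Suc (Suc n))"
  proof -
    fix n
    have "(deriv ^^ Suc (Suc n)) f 0 / fact n = of_nat (Suc n) * (of_nat (Suc (Suc n)) * ((deriv ^^ Suc (Suc n)) f 0 / (of_nat (Suc (Suc n)) * (of_nat (Suc n) * fact n))))"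
      by (rule gen2[OF nz nz fz])
    then show "?thesis n" unfolding taylor_coeff_def fS fact_Suc[where 'a=complex, of n] by (simp only: mult.assoc)
  qed
  show "(\<lambda>n. of_nat (Suc n) * taylor_coeff f (Suc n) * z^n) sums deriv f z"
    using holomorphic_power_series[OF hd zb] by (simp add: e1 c1 del: funpow.simps)
  show "(\<lambda>n. of_nat (Suc n) * of_nat (Suc (Suc n)) * taylor_coeff f (Suc (Suc n)) * z^n) sums deriv (deriv f) z"
    using holomorphic_power_series[OF hdd zb] by (simp add: e2 c2 del: funpow.simps)
qed

definition Dfn :: "real \<Rightarrow> real \<Rightarrow> real \<Rightarrow> real" where
  "Dfn b M r = 1 - 4*b*r - M*(1/(1-r)^2 - 1 - 2*r)"
definition Nfn :: "real \<Rightarrow> real \<Rightarrow> real \<Rightarrow> real" where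
  "Nfn b M r = 4*b*r + M*(r*(2/(1-r)^3 - 2))"

lemma norm_sums_le:
  fixes g :: "nat \<Rightarrow> 'a::banach"
  assumes "g sums s" "h sums t" "\<And>n. norm (g n) \<le> h n"
  shows "norm s \<le> t"
  using norm_suminf_le[of g h] assms sums_unique sums_summable by metis

lemma rs1:
  fixes z :: "'a :: {real_normed_field,banach}"
  assumes "norm z < 1"
  shows "(\<lambda>i. of_nat (Suc (i+2)) * z^(i+2)) sums (1/(1-z)^2 - 1 - 2*z)"
proof -
  have "(\<lambda>n. of_nat (Suc n) * z ^ n) sums (1/(1-z)^2 - 1 - 2*z + (\<Sum>i<2. of_nat (Suc i) * z ^ i))"
    using geometric_deriv_sums[OF assms] by (simp add: eval_nat_numeral)
  then show ?thesis by (subst sums_iff_shift)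
qed

lemma rs2:
  fixes z :: "'a :: {real_normed_field,banach}"
  assumes "norm z < 1"
  shows "(\<lambda>i. of_nat (Suc (i+1)) * of_nat (Suc (Suc (i+1))) * z^(i+1)) sums (2/(1-z)^3 - 2)"
proof -
  have "(\<lambda>n. of_nat (Suc n) * of_nat (Suc (Suc n)) * z ^ n) sums (2/(1-z)^3 - 2 + (\<Sum>i<1. of_nat (Suc i) * of_nat (Suc (Suc i)) * z ^ i))"
    using geometric_deriv2_sums[OF assms] by simp
  then show ?thesis by (subst sums_iff_shift)
qed

lemma bounds:
  assumes fF: "f \<in> class_F b M" and z: "norm z < 1"
  shows "Dfn b M (norm z) \<le> norm (deriv f z)"
    and "norm (z * deriv (deriv f) z) \<le> Nfn b M (norm z)"
proof -
  define a where "a = taylor_coeff f"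
  define r where "r = norm z"
  have r: "0 \<le> r" "r < 1" using z by (auto simp: r_def)
  have hol: "f holomorphic_on ball 0 1" and d0: "deriv f 0 = 1" and a2: "norm (a 2) = 2*b"
    and aM: "\<And>n. n \<ge> 3 \<Longrightarrow> norm (a n) \<le> M"
    using fF by (auto simp: class_F_def class_A_def a_def)
  have M0: "0 \<le> M" using aM[of 3] norm_ge_zero[of "a 3"] by linarith
  have a1: "a 1 = 1" using d0 by (simp add: a_def taylor_coeff_def)
  note S = series_derivs[OF hol z, folded a_def]
  define g where "g n = of_nat (Suc n) * a (Suc n) * z^n" for n
  have T1: "(\<lambda>i. g (i+2)) sums (deriv f z - (1 + 2 * a 2 * z))"
  proof -
    have "g sums (deriv f z - (1 + 2 * a 2 * z) + (\<Sum>i<2. g i))"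
      using S(1) a1 by (simp add: g_def[abs_def] eval_nat_numeral)
    then show ?thesis by (subst sums_iff_shift)
  qed
  have B1: "(\<lambda>i. M * (of_nat (Suc (i+2)) * r^(i+2))) sums (M * (1/(1-r)^2 - 1 - 2*r))"
    using rs1[of r] r by (intro sums_mult) auto
  have "norm (deriv f z - (1 + 2 * a 2 * z)) \<le> M * (1/(1-r)^2 - 1 - 2*r)"
  proof (rule norm_sums_le[OF T1 B1])
    fix i
    have "norm (g (i+2)) = of_nat (Suc (i+2)) * norm (a (Suc (i+2))) * r^(i+2)"
      by (simp only: g_def norm_mult norm_power r_def norm_of_nat)
    also have "\<dots> \<le> of_nat (Suc (i+2)) * M * r^(i+2)"
      using aM[of "Suc (i+2)"] r by (intro mult_right_mono mult_left_mono) auto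
    finally show "norm (g (i+2)) \<le> M * (of_nat (Suc (i+2)) * r^(i+2))" by (simp add: algebra_simps)
  qed
  moreover have "norm (2 * a 2 * z) = 4*b*r" by (simp add: norm_mult a2 r_def)
  moreover have "norm (deriv f z) \<ge> 1 - norm (2 * a 2 * z) - norm (deriv f z - (1 + 2 * a 2 * z))"
  proof -
    have "norm (1 + 2 * a 2 * z) \<le> norm (deriv f z) + norm (deriv f z - (1 + 2 * a 2 * z))"
      by (metis norm_triangle_ineq4 add_diff_cancel_left' diff_diff_eq2 norm_minus_commute)
    moreover have "1 - norm (2 * a 2 * z) \<le> norm (1 + 2 * a 2 * z)"
      by (metis norm_one norm_diff_ineq)
    ultimately show ?thesis by linarith
  qed
  ultimately show "Dfn b M (norm z) \<le> norm (deriv f z)"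
    by (simp add: Dfn_def r_def[symmetric])
  define G where "G n = of_nat (Suc n) * of_nat (Suc (Suc n)) * a (Suc (Suc n)) * z^n" for n
  have S2: "(\<lambda>n. z * G n) sums (z * deriv (deriv f) z)"
    using S(2) unfolding G_def by (intro sums_mult)
  have T2: "(\<lambda>i. z * G (i+1)) sums (z * deriv (deriv f) z - 2 * a 2 * z)"
  proof -
    have "(\<lambda>n. z * G n) sums (z * deriv (deriv f) z - 2 * a 2 * z + (\<Sum>i<1. z * G i))"
      using S2 by (simp add: G_def numeral_2_eq_2 algebra_simps)
    then show ?thesis by (subst sums_iff_shift)
  qed
  have B2: "(\<lambda>i. M * (r * (of_nat (Suc (i+1)) * of_nat (Suc (Suc (i+1))) * r^(i+1)))) sums (M * (r * (2/(1-r)^3 - 2)))"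
    using rs2[of r] r by (intro sums_mult) auto
  have "norm (z * deriv (deriv f) z - 2 * a 2 * z) \<le> M * (r * (2/(1-r)^3 - 2))"
  proof (rule norm_sums_le[OF T2 B2])
    fix i
    have "norm (z * G (i+1)) = r * (of_nat (Suc (i+1)) * of_nat (Suc (Suc (i+1))) * norm (a (Suc (Suc (i+1)))) * r^(i+1))"
      by (simp only: G_def norm_mult norm_power r_def norm_of_nat mult.assoc)
    also have "\<dots> \<le> r * (of_nat (Suc (i+1)) * of_nat (Suc (Suc (i+1))) * M * r^(i+1))"
      using aM[of "Suc (Suc (i+1))"] r by (intro mult_right_mono mult_left_mono) auto
    finally show "norm (z * G (i+1)) \<le> M * (r * (of_nat (Suc (i+1)) * of_nat (Suc (Suc (i+1))) * r^(i+1)))"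
      by (simp add: algebra_simps)
  qed
  moreover have "norm (2 * a 2 * z) = 4*b*r" by (simp add: norm_mult a2 r_def)
  moreover have "norm (z * deriv (deriv f) z) \<le> norm (2 * a 2 * z) + norm (z * deriv (deriv f) z - 2 * a 2 * z)"
    by (metis add.commute diff_add_cancel norm_triangle_ineq)
  ultimately show "norm (z * deriv (deriv f) z) \<le> Nfn b M (norm z)"
    by (simp add: Nfn_def r_def[symmetric])
qed


lemma h_eq:
  assumes "r < 1"
  shows "(1-r)^3 * (Nfn b M r - (1-\<alpha>) * Dfn b M r) =
    M*(1-\<alpha>+(1+\<alpha>)*r) - ((1-\<alpha>)*(1+M) - 2*(2-\<alpha>)*(2*b-M)*r)*(1-r)^3"
proof -
  define A where "A = 1/(1-r)^2"
  define B where "B = 1/(1-r)^3"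
  have nz: "1 - r \<noteq> 0" using assms by simp
  have hA: "(1-r)^3 * A = 1 - r" unfolding A_def using nz
    by (simp add: power2_eq_square power3_eq_cube)
  have hB: "(1-r)^3 * B = 1" unfolding B_def using nz by simp
  have N: "Nfn b M r = 4*b*r + M*(r*(2*B - 2))" by (simp add: Nfn_def B_def)
  have D: "Dfn b M r = 1 - 4*b*r - M*(A - 1 - 2*r)" by (simp add: Dfn_def A_def)
  have "(1-r)^3 * (Nfn b M r - (1-\<alpha>) * Dfn b M r) =
        (1-r)^3 * (4*b*r - 2*M*r - (1-\<alpha>)*(1 - 4*b*r + M + 2*M*r)) + 2*M*r*((1-r)^3*B)
          + (1-\<alpha>)*M*((1-r)^3*A)"
    unfolding N D by (simp only: algebra_simps)
  also have "\<dots> = (1-r)^3 * (4*b*r - 2*M*r - (1-\<alpha>)*(1 - 4*b*r + M + 2*M*r)) + 2*M*r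
          + (1-\<alpha>)*M*(1-r)"
    unfolding hA hB by simp
  also have "\<dots> = M*(1-\<alpha>+(1+\<alpha>)*r) - ((1-\<alpha>)*(1+M) - 2*(2-\<alpha>)*(2*b-M)*r)*(1-r)^3"
    by (simp only: algebra_simps)
  finally show ?thesis .
qed

lemma q_mono:
  fixes s t :: real
  assumes "0 \<le> s" "s < t" "t < 1"
  shows "s*(2/(1-s)^3 - 2) < t*(2/(1-t)^3 - 2)"
proof -
  have c1: "(1-t)^3 < (1-s)^3" using assms by (intro power_strict_mono) auto
  have c2: "0 < (1-t)^3" using assms by auto
  have c3: "(1-s)^3 \<le> 1" using assms by (intro power_le_one) auto
  have c4: "0 < (1-s)^3" using assms by auto
  have "1/(1-s)^3 \<le> 1/(1-t)^3" using divide_left_mono[of "(1-t)^3" "(1-s)^3" 1] c1 c2 c4 mult_pos_pos[OF c4 c2] by simp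
  moreover have "1 \<le> 1/(1-s)^3" using le_divide_eq_1_pos[OF c4, of 1] c3 by simp
  moreover have "1 < 1/(1-t)^3" using less_divide_eq_1_pos[OF c2, of 1] c1 c3 by simp
  ultimately have "2/(1-s)^3 - 2 \<le> 2/(1-t)^3 - 2" "0 \<le> 2/(1-s)^3 - 2" "0 < 2/(1-t)^3 - 2" by auto
  then have "s*(2/(1-s)^3 - 2) \<le> s*(2/(1-t)^3 - 2)" using assms by (intro mult_left_mono) auto
  also have "\<dots> < t*(2/(1-t)^3 - 2)" using assms \<open>0 < 2/(1-t)^3 - 2\<close> by (intro mult_strict_right_mono) auto
  finally show ?thesis .
qed

lemma p_mono:
  fixes s t :: real
  assumes "0 \<le> s" "s < t" "t < 1"
  shows "(1/(1-s)^2 - 2 * s) \<le> (1/(1-t)^2 - 2*t)"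
proof -
  define u v where "u = 1 - s" and "v = 1 - t"
  have uv: "0 < v" "v < u" "u \<le> 1" using assms unfolding u_def v_def by linarith+
  have uv1: "u * v \<le> 1" using uv by (simp add: mult_le_one)
  have uv0: "0 \<le> u * v" using uv by simp
  have "u^2 * v^2 = (u * v) * (u * v)" by (simp add: power2_eq_square)
  also have "\<dots> \<le> (u * v) * 1" using uv1 uv0 by (intro mult_left_mono) auto
  finally have k1: "u^2 * v^2 \<le> u * v" by simp
  have e: "u + v - 2 * (u * v) = u * (1 - v) + v * (1 - u)" by (simp add: algebra_simps)
  have "0 \<le> u * (1 - v)" "0 \<le> v * (1 - u)" using uv by auto
  then have k2: "2 * (u * v) \<le> u + v" using e by linarith
  from k1 k2 have k: "2 * (u^2 * v^2) \<le> u + v" by linarith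
  have pos: "0 < u^2 * v^2" using uv by auto
  have "1/v^2 - 1/u^2 = (u^2 - v^2) / (u^2 * v^2)" using uv
    by (simp add: diff_divide_distrib)
  also have "u^2 - v^2 = (u-v)*(u+v)" by (simp add: power2_eq_square algebra_simps)
  finally have "1/v^2 - 1/u^2 = (u-v)*((u+v)/(u^2 * v^2))" by simp
  also have "\<dots> \<ge> (u-v)*2" using k pos uv by (intro mult_left_mono) (auto simp: le_divide_eq)
  finally have "1/v^2 - 1/u^2 \<ge> 2*(u-v)" by simp
  then show ?thesis by (simp add: u_def v_def)
qed

lemma h_mono:
  fixes s t b M \<alpha> :: real
  assumes b: "0 \<le> b" and M: "0 < M" and a: "0 \<le> \<alpha>" "\<alpha> < 1"
    and st: "0 \<le> s" "s < t" "t < 1"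
  shows "Nfn b M s - (1-\<alpha>)*Dfn b M s < Nfn b M t - (1-\<alpha>)*Dfn b M t"
proof -
  define Q where "Q r = r*(2/(1-r)^3 - 2)" for r :: real
  define P where "P r = 1/(1-r)^2 - 2*r" for r :: real
  have "Q s < Q t" unfolding Q_def by (rule q_mono[OF st])
  have "P s \<le> P t" unfolding P_def by (rule p_mono[OF st])
  have e: "\<And>r. Nfn b M r - (1-\<alpha>)*Dfn b M r = -(1-\<alpha>) + (2-\<alpha>)*4*b*r + M * Q r + (1-\<alpha>)*M*(P r - 1)"
    by (simp add: Nfn_def Dfn_def Q_def P_def algebra_simps)
  have 1: "M * Q s < M * Q t" using M \<open>Q s < Q t\<close> by simp
  have 2: "(1-\<alpha>)*M*(P s - 1) \<le> (1-\<alpha>)*M*(P t - 1)" using M a \<open>P s \<le> P t\<close>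
    by (intro mult_left_mono) auto
  have 3: "(2-\<alpha>)*4*b * s \<le> (2-\<alpha>)*4*b*t" using a b st by (intro mult_left_mono) auto
  show ?thesis unfolding e using 1 2 3 by linarith
qed

lemma N_pos:
  fixes b M r :: real
  assumes "0 \<le> b" "0 < M" "0 < r" "r < 1"
  shows "0 < Nfn b M r"
proof -
  have "(1-r)^3 < 1" using assms by (simp add: power_less_one_iff)
  moreover have "0 < (1-r)^3" using assms by simp
  ultimately have "1 < 1/(1-r)^3" by (simp add: field_simps)
  then have "0 < 2/(1-r)^3 - 2" by simp
  then have "0 < M*(r*(2/(1-r)^3 - 2))" using assms by (intro mult_pos_pos) auto
  moreover have "0 \<le> 4*b*r" using assms by simp
  ultimately show ?thesis unfolding Nfn_def by linarith
qed

lemma root_props: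
  fixes b M \<alpha> r0 :: real
  assumes b: "0 \<le> b" and M: "0 < M" and a: "0 \<le> \<alpha>" "\<alpha> < 1"
    and r0: "0 < r0" "r0 < 1"
    and eq: "((1 - \<alpha>) * (1 + M) - 2 * (2 - \<alpha>) * (2 * b - M) * r0) * (1 - r0) ^ 3
                 = M * (1 - \<alpha> + (1 + \<alpha>) * r0)"
  shows "Nfn b M r0 = (1-\<alpha>) * Dfn b M r0"
    and "\<And>r. 0 \<le> r \<Longrightarrow> r < r0 \<Longrightarrow> Nfn b M r < (1-\<alpha>) * Dfn b M r"
    and "\<And>r. r0 < r \<Longrightarrow> r < 1 \<Longrightarrow> Nfn b M r > (1-\<alpha>) * Dfn b M r"
    and "\<And>r. 0 \<le> r \<Longrightarrow> r \<le> r0 \<Longrightarrow> 0 < Dfn b M r"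
proof -
  have "(1-r0)^3 * (Nfn b M r0 - (1-\<alpha>) * Dfn b M r0) = 0"
    using h_eq[of r0 b M \<alpha>] r0 eq by simp
  moreover have "(1-r0)^3 \<noteq> 0" using r0 by simp
  ultimately show h0: "Nfn b M r0 = (1-\<alpha>) * Dfn b M r0" by simp
  show lt: "\<And>r. 0 \<le> r \<Longrightarrow> r < r0 \<Longrightarrow> Nfn b M r < (1-\<alpha>) * Dfn b M r"
    using h_mono[OF b M a] h0 r0 by (smt (verit))
  show "\<And>r. r0 < r \<Longrightarrow> r < 1 \<Longrightarrow> Nfn b M r > (1-\<alpha>) * Dfn b M r"
    using h_mono[OF b M a] h0 r0 by (smt (verit))
  fix r assume r: "0 \<le> r" "r \<le> r0"
  show "0 < Dfn b M r"
  proof (cases "r = 0")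
    case True then show ?thesis by (simp add: Dfn_def)
  next
    case False
    then have "0 < Nfn b M r" using N_pos[OF b M] r r0 by simp
    moreover have "Nfn b M r \<le> (1-\<alpha>) * Dfn b M r" using lt[of r] h0 r
      by (cases "r = r0") auto
    ultimately have "0 < (1-\<alpha>) * Dfn b M r" by linarith
    then show ?thesis using a by (simp add: zero_less_mult_iff)
  qed
qed




definition F0 :: "real \<Rightarrow> real \<Rightarrow> complex \<Rightarrow> complex" where
  "F0 b M = (\<lambda>z. z - 2 * of_real b * z ^ 2 - of_real M * z ^ 3 / (1 - z))"

definition cf :: "real \<Rightarrow> real \<Rightarrow> nat \<Rightarrow> complex" where
  "cf b M n = (if n = 1 then 1 else if n = 2 then - 2 * of_real b else if n \<ge> 3 then - of_real M else 0)"

lemma cf_sums: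
  assumes z: "norm z < 1"
  shows "(\<lambda>n. cf b M n * z^n) sums F0 b M z"
proof -
  have g: "(\<lambda>i. z^i) sums (1/(1-z))" using geometric_sums[OF z] by simp
  have "(\<lambda>i. (- of_real M * z^3) * z^i) sums ((- of_real M * z^3) * (1/(1-z)))"
    by (rule sums_mult[OF g])
  then have "(\<lambda>i. cf b M (i+3) * z^(i+3)) sums (- of_real M * z^3 / (1-z))"
    by (simp add: cf_def power_add algebra_simps)
  then have "(\<lambda>n. cf b M n * z^n) sums (- of_real M * z^3 / (1-z) + (\<Sum>i<3. cf b M i * z^i))"
    by (subst (asm) sums_iff_shift)
  moreover have "- of_real M * z^3 / (1-z) + (\<Sum>i<3. cf b M i * z^i) = F0 b M z"
    by (simp add: F0_def cf_def eval_nat_numeral algebra_simps)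
  ultimately show ?thesis by simp
qed

lemma F0_expansion: "F0 b M has_fps_expansion Abs_fps (cf b M)"
proof -
  have "summable (\<lambda>n. cf b M n * (1/2)^n)"
    using cf_sums[of "1/2"] by (auto intro: sums_summable)
  then have "conv_radius (cf b M) \<ge> norm (1/2 :: complex)" by (rule conv_radius_geI)
  then have "fps_conv_radius (Abs_fps (cf b M)) > 0"
    unfolding fps_conv_radius_def by (auto elim!: less_le_trans[rotated])
  moreover have "eventually (\<lambda>z. eval_fps (Abs_fps (cf b M)) z = F0 b M z) (nhds 0)"
  proof -
    have "eventually (\<lambda>z. z \<in> ball (0::complex) 1) (nhds 0)"
      by (rule eventually_nhds_in_open) auto
    then show ?thesis
    proof (rule eventually_mono)
      fix z :: complex assume "z \<in> ball 0 1"
      then have "norm z < 1" by simp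
      then show "eval_fps (Abs_fps (cf b M)) z = F0 b M z"
        using cf_sums[of z b M] by (simp add: eval_fps_def sums_iff)
    qed
  qed
  ultimately show ?thesis unfolding has_fps_expansion_def by simp
qed

lemma F0_coeff: "taylor_coeff (F0 b M) n = cf b M n"
  using fps_nth_fps_expansion[OF F0_expansion[of b M], of n] by (simp add: taylor_coeff_def)

lemma F0_hol: "F0 b M holomorphic_on ball 0 1"
proof -
  have "\<And>z::complex. z \<in> ball 0 1 \<Longrightarrow> 1 - z \<noteq> 0" by auto
  then show ?thesis unfolding F0_def by (auto intro!: holomorphic_intros)
qed

lemma F0_in:
  assumes "0 \<le> b" "0 < M"
  shows "F0 b M \<in> class_F b M"
proof -
  have "deriv (F0 b M) 0 = 1" using F0_coeff[of b M 1] by (simp add: taylor_coeff_def cf_def)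
  moreover have "F0 b M 0 = 0" by (simp add: F0_def)
  moreover have "norm (taylor_coeff (F0 b M) 2) = 2*b" using assms by (simp add: F0_coeff cf_def norm_mult)
  moreover have "\<forall>n\<ge>3. norm (taylor_coeff (F0 b M) n) \<le> M" using assms by (simp add: F0_coeff cf_def)
  ultimately show ?thesis using F0_hol by (simp add: class_F_def class_A_def)
qed

lemma F0_vals:
  assumes t: "0 \<le> t" "t < 1"
  shows "deriv (F0 b M) (of_real t) = of_real (Dfn b M t)"
    and "of_real t * deriv (deriv (F0 b M)) (of_real t) = - of_real (Nfn b M t)"
proof -
  define z where "z = (of_real t :: complex)"
  have z: "norm z < 1" using t by (simp add: z_def)
  note S = series_derivs[OF F0_hol z, unfolded F0_coeff]
  have "(\<lambda>i. of_nat (Suc (i+2)) * cf b M (Suc (i+2)) * z^(i+2)) sums (- of_real M * (1/(1-z)^2 - 1 - 2*z))"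
    using sums_mult[OF rs1[OF z], of "- of_real M"] by (simp add: cf_def algebra_simps)
  then have "(\<lambda>n. of_nat (Suc n) * cf b M (Suc n) * z^n) sums
      (- of_real M * (1/(1-z)^2 - 1 - 2*z) + (\<Sum>i<2. of_nat (Suc i) * cf b M (Suc i) * z^i))"
    by (subst (asm) sums_iff_shift)
  then have "deriv (F0 b M) z = - of_real M * (1/(1-z)^2 - 1 - 2*z) + (\<Sum>i<2. of_nat (Suc i) * cf b M (Suc i) * z^i)"
    using S(1) sums_unique2 by blast
  then show "deriv (F0 b M) (of_real t) = of_real (Dfn b M t)"
    by (simp add: z_def Dfn_def cf_def eval_nat_numeral algebra_simps)
  have "(\<lambda>i. of_nat (Suc (i+1)) * of_nat (Suc (Suc (i+1))) * cf b M (Suc (Suc (i+1))) * z^(i+1)) sums (- of_real M * (2/(1-z)^3 - 2))"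
    using sums_mult[OF rs2[OF z], of "- of_real M"] by (simp add: cf_def algebra_simps)
  then have "(\<lambda>n. of_nat (Suc n) * of_nat (Suc (Suc n)) * cf b M (Suc (Suc n)) * z^n) sums
      (- of_real M * (2/(1-z)^3 - 2) + (\<Sum>i<1. of_nat (Suc i) * of_nat (Suc (Suc i)) * cf b M (Suc (Suc i)) * z^i))"
    by (subst (asm) sums_iff_shift)
  then have "deriv (deriv (F0 b M)) z = - of_real M * (2/(1-z)^3 - 2) + (\<Sum>i<1. of_nat (Suc i) * of_nat (Suc (Suc i)) * cf b M (Suc (Suc i)) * z^i)"
    using S(2) sums_unique2 by blast
  then have "z * deriv (deriv (F0 b M)) z = z * (- of_real M * (2/(1-z)^3 - 2) + (\<Sum>i<1. of_nat (Suc i) * of_nat (Suc (Suc i)) * cf b M (Suc (Suc i)) * z^i))"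
    by simp
  also have "\<dots> = - of_real (Nfn b M t)"
    by (simp add: z_def Nfn_def cf_def algebra_simps)
  finally show "of_real t * deriv (deriv (F0 b M)) (of_real t) = - of_real (Nfn b M t)"
    by (simp add: z_def)
qed


lemma key_bound:
  assumes fF: "f \<in> class_F b M" and z: "norm z < 1" and D: "0 < Dfn b M (norm z)"
  shows "deriv f z \<noteq> 0" "norm (z * deriv (deriv f) z / deriv f z) \<le> Nfn b M (norm z) / Dfn b M (norm z)"
proof -
  note B = bounds[OF fF z]
  show "deriv f z \<noteq> 0" using B(1) D by auto
  have "norm (z * deriv (deriv f) z / deriv f z) = norm (z * deriv (deriv f) z) / norm (deriv f z)"
    by (simp add: norm_divide)
  also have "\<dots> \<le> Nfn b M (norm z) / Dfn b M (norm z)"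
    using B D by (intro frac_le) (auto intro: order.trans[OF norm_ge_zero])
  finally show "norm (z * deriv (deriv f) z / deriv f z) \<le> Nfn b M (norm z) / Dfn b M (norm z)" .
qed

lemma F0_ratio:
  assumes "0 \<le> t" "t < 1"
  shows "of_real t * deriv (deriv (F0 b M)) (of_real t) / deriv (F0 b M) (of_real t)
         = of_real (- Nfn b M t / Dfn b M t)"
  using F0_vals[OF assms, of b M] by simp

lemma exists_t:
  assumes r0: "0 < r0" "r0 < 1" and D: "0 < Dfn b M r0" and r: "r0 < r"
  shows "\<exists>t. r0 < t \<and> t < r \<and> t < 1 \<and> 0 < Dfn b M t"
proof -
  have "isCont (Dfn b M) r0"
    using r0 unfolding Dfn_def by (intro continuous_intros) auto
  then have "(Dfn b M \<longlongrightarrow> Dfn b M r0) (at r0)" by (simp add: isCont_def)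
  then have "eventually (\<lambda>t. 0 < Dfn b M t) (at r0)" using D by (rule order_tendstoD)
  then have "eventually (\<lambda>t. 0 < Dfn b M t) (at_right r0)" by (simp add: eventually_at_split)
  then obtain c where c: "c > r0" "\<And>y. y > r0 \<Longrightarrow> y < c \<Longrightarrow> 0 < Dfn b M y"
    unfolding eventually_at_right_field by blast
  define m where "m = min (min r 1) c"
  have m: "r0 < m" "m \<le> r" "m \<le> 1" "m \<le> c" using c r r0 by (auto simp: m_def)
  define t where "t = (r0 + m) / 2"
  have "r0 < t" "t < r" "t < 1" "t < c" using m by (auto simp: t_def)
  then show ?thesis using c by blast
qed

lemma Re_ge: "Re (1 + w) \<ge> 1 - norm w"
  using abs_Re_le_cmod[of w] by simp


theorem theorem3p6:
  fixes b M \<alpha> r0 r1 :: real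
  assumes hb: "0 \<le> b" "b \<le> 1"
    and hM: "M > 0"
    and h\<alpha>: "0 \<le> \<alpha>" "\<alpha> < 1"
    and hr0: "0 < r0" "r0 < 1"
    and hr0eq: "((1 - \<alpha>) * (1 + M) - 2 * (2 - \<alpha>) * (2 * b - M) * r0) * (1 - r0) ^ 3
                 = M * (1 - \<alpha> + (1 + \<alpha>) * r0)"
    and hr1: "0 < r1" "r1 < 1"
    and hr1eq: "((1 - 1/2) * (1 + M) - 2 * (2 - 1/2) * (2 * b - M) * r1) * (1 - r1) ^ 3
                 = M * (1 - 1/2 + (1 + 1/2) * r1)"
  defines "f0 \<equiv> (\<lambda>z::complex. z - 2 * of_real b * z ^ 2 - of_real M * z ^ 3 / (1 - z))"
  shows "(\<forall>f\<in>class_F b M. \<forall>z. norm z \<le> r0 \<longrightarrow>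
            deriv f z \<noteq> 0 \<and> norm (z * deriv (deriv f) z / deriv f z) \<le> 1 - \<alpha>)
       \<and> radius_convexity_order (class_F b M) \<alpha> = r0
       \<and> radius_uniform_convexity (class_F b M) = r1
       \<and> f0 \<in> class_F b M
       \<and> norm (of_real r0 * deriv (deriv f0) (of_real r0) / deriv f0 (of_real r0)) = 1 - \<alpha>"
proof -
  have f0eq: "f0 = F0 b M" unfolding f0_def F0_def by simp
  have h12: "0 \<le> (1/2::real)" "(1/2::real) < 1" by auto
  note R0 = root_props[OF hb(1) hM h\<alpha> hr0 hr0eq]
  note R1 = root_props[OF hb(1) hM h12 hr1 hr1eq]
  have F0in: "F0 b M \<in> class_F b M" by (rule F0_in[OF hb(1) hM])
  have P1: "\<forall>f\<in>class_F b M. \<forall>z. norm z \<le> r0 \<longrightarrow>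
            deriv f z \<noteq> 0 \<and> norm (z * deriv (deriv f) z / deriv f z) \<le> 1 - \<alpha>"
  proof (intro ballI allI impI)
    fix f :: "complex \<Rightarrow> complex" and z :: complex assume fF: "f \<in> class_F b M" and z: "norm z \<le> r0"
    have z1: "norm z < 1" using z hr0 by linarith
    have D: "0 < Dfn b M (norm z)" using R0(4) z by simp
    note K = key_bound[OF fF z1 D]
    have "Nfn b M (norm z) \<le> (1-\<alpha>) * Dfn b M (norm z)"
      using R0(1) R0(2)[of "norm z"] z by (cases "norm z = r0") auto
    then have "Nfn b M (norm z) / Dfn b M (norm z) \<le> 1 - \<alpha>" using D by (simp add: divide_le_eq)
    then show "deriv f z \<noteq> 0 \<and> norm (z * deriv (deriv f) z / deriv f z) \<le> 1 - \<alpha>"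
      using K by linarith
  qed
  have P2: "radius_convexity_order (class_F b M) \<alpha> = r0"
    unfolding radius_convexity_order_def
  proof (rule cSup_eq_maximum)
    show "r0 \<in> {r \<in> {0<..1}. \<forall>f\<in>class_F b M. \<forall>z. norm z < r \<longrightarrow>
            deriv f z \<noteq> 0 \<and> Re (1 + z * deriv (deriv f) z / deriv f z) > \<alpha>}"
    proof (intro CollectI conjI ballI allI impI)
      show "r0 \<in> {0<..1}" using hr0 by auto
      fix f :: "complex \<Rightarrow> complex" and z :: complex assume fF: "f \<in> class_F b M" and z: "norm z < r0"
      have z1: "norm z < 1" using z hr0 by linarith
      have D: "0 < Dfn b M (norm z)" using R0(4) z by simp
      note K = key_bound[OF fF z1 D]
      have "Nfn b M (norm z) < (1-\<alpha>) * Dfn b M (norm z)" using R0(2)[of "norm z"] z by simp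
      then have "Nfn b M (norm z) / Dfn b M (norm z) < 1 - \<alpha>" using D by (simp add: divide_less_eq)
      then have "norm (z * deriv (deriv f) z / deriv f z) < 1 - \<alpha>" using K by linarith
      then show "Re (1 + z * deriv (deriv f) z / deriv f z) > \<alpha>"
        using Re_ge[of "z * deriv (deriv f) z / deriv f z"] by linarith
      show "deriv f z \<noteq> 0" by (rule K(1))
    qed
  next
    fix r assume "r \<in> {r \<in> {0<..1}. \<forall>f\<in>class_F b M. \<forall>z. norm z < r \<longrightarrow>
            deriv f z \<noteq> 0 \<and> Re (1 + z * deriv (deriv f) z / deriv f z) > \<alpha>}"
    then have H: "\<And>z. norm z < r \<Longrightarrow> Re (1 + z * deriv (deriv (F0 b M)) z / deriv (F0 b M) z) > \<alpha>"
      using F0in by blast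
    show "r \<le> r0"
    proof (rule ccontr)
      assume "\<not> r \<le> r0"
      then obtain t where t: "r0 < t" "t < r" "t < 1" "0 < Dfn b M t"
      proof -
        have Dr0: "0 < Dfn b M r0" using R0(4)[of r0] hr0 by simp
        have "r0 < r" using \<open>\<not> r \<le> r0\<close> by simp
        from exists_t[OF hr0 Dr0 this] show ?thesis using that by blast
      qed
      have "norm (of_real t :: complex) < r" using t hr0 by simp
      from H[OF this] have "\<alpha> < 1 - Nfn b M t / Dfn b M t"
        using F0_ratio[of t b M] t hr0 by simp
      then have "Nfn b M t < (1-\<alpha>) * Dfn b M t" using t by (simp add: field_simps)
      then show False using R0(3)[of t] t by simp
    qed
  qed
  have P3: "radius_uniform_convexity (class_F b M) = r1"
    unfolding radius_uniform_convexity_def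
  proof (rule cSup_eq_maximum)
    show "r1 \<in> {r \<in> {0<..1}. \<forall>f\<in>class_F b M. \<forall>z. norm z < r \<longrightarrow>
            deriv f z \<noteq> 0 \<and>
            Re (1 + z * deriv (deriv f) z / deriv f z) > norm (z * deriv (deriv f) z / deriv f z)}"
    proof (intro CollectI conjI ballI allI impI)
      show "r1 \<in> {0<..1}" using hr1 by auto
      fix f :: "complex \<Rightarrow> complex" and z :: complex assume fF: "f \<in> class_F b M" and z: "norm z < r1"
      have z1: "norm z < 1" using z hr1 by linarith
      have D: "0 < Dfn b M (norm z)" using R1(4) z by simp
      note K = key_bound[OF fF z1 D]
      have "Nfn b M (norm z) < (1-1/2) * Dfn b M (norm z)" using R1(2)[of "norm z"] z by simp
      then have "Nfn b M (norm z) / Dfn b M (norm z) < 1/2" using D by (simp add: divide_less_eq)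
      then have "norm (z * deriv (deriv f) z / deriv f z) < 1/2" using K by linarith
      then show "Re (1 + z * deriv (deriv f) z / deriv f z) > norm (z * deriv (deriv f) z / deriv f z)"
        using Re_ge[of "z * deriv (deriv f) z / deriv f z"] by linarith
      show "deriv f z \<noteq> 0" by (rule K(1))
    qed
  next
    fix r assume "r \<in> {r \<in> {0<..1}. \<forall>f\<in>class_F b M. \<forall>z. norm z < r \<longrightarrow>
            deriv f z \<noteq> 0 \<and>
            Re (1 + z * deriv (deriv f) z / deriv f z) > norm (z * deriv (deriv f) z / deriv f z)}"
    then have H: "\<And>z. norm z < r \<Longrightarrow> Re (1 + z * deriv (deriv (F0 b M)) z / deriv (F0 b M) z)
                   > norm (z * deriv (deriv (F0 b M)) z / deriv (F0 b M) z)"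
      using F0in by blast
    show "r \<le> r1"
    proof (rule ccontr)
      assume "\<not> r \<le> r1"
      then obtain t where t: "r1 < t" "t < r" "t < 1" "0 < Dfn b M t"
      proof -
        have Dr0: "0 < Dfn b M r1" using R1(4)[of r1] hr1 by simp
        have "r1 < r" using \<open>\<not> r \<le> r1\<close> by simp
        from exists_t[OF hr1 Dr0 this] show ?thesis using that by blast
      qed
      have N: "0 < Nfn b M t" using N_pos[OF hb(1) hM, of t] t hr1 by simp
      have "norm (of_real t :: complex) < r" using t hr1 by simp
      from H[OF this] have "norm (of_real (- Nfn b M t / Dfn b M t) :: complex) < 1 - Nfn b M t / Dfn b M t"
        using F0_ratio[of t b M] t hr1 by simp
      then have "Nfn b M t / Dfn b M t < 1 - Nfn b M t / Dfn b M t" using N t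
        by (simp add: norm_divide)
      then have "Nfn b M t < (1-1/2) * Dfn b M t" using t by (simp add: field_simps)
      then show False using R1(3)[of t] t by simp
    qed
  qed
  have P5: "norm (of_real r0 * deriv (deriv f0) (of_real r0) / deriv f0 (of_real r0)) = 1 - \<alpha>"
  proof -
    have D: "0 < Dfn b M r0" using R0(4)[of r0] hr0 by simp
    have N: "0 < Nfn b M r0" using N_pos[OF hb(1) hM, of r0] hr0 by simp
    have "norm (of_real r0 * deriv (deriv f0) (of_real r0) / deriv f0 (of_real r0))
          = Nfn b M r0 / Dfn b M r0"
      using F0_ratio[of r0 b M] hr0 N D by (simp add: f0eq norm_divide)
    also have "\<dots> = 1 - \<alpha>" using R0(1) D by simp
    finally show ?thesis .
  qed
  have P4: "f0 \<in> class_F b M" using F0in by (simp only: f0eq)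
  show ?thesis using P1 P2 P3 P4 P5 by blast
qed

end
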